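(* Suppose $\kappa$ is Mahlo and $\kappa\le\lambda$. Then for every function $f:P_\kappa\lambda\to P_\kappa\lambda$, the set $C_f$ is a $1$-club subset of $P_\kappa\lambda$.
   Context: $P_\kappa\lambda=\{x\subseteq\lambda:|x|<\kappa\}$, $\kappa_x=|x\cap\kappa|$. $C_f=\{x\in P_\kappa\lambda: x\cap\kappa\neq\emptyset,\ f[P_{\kappa_x}x]\subseteq P_{\kappa_x}x\}$. A set is strongly stationary if it meets every $C_f$; $\mathrm{NSS}_{\kappa,\lambda}$ is the ideal of non-strongly-stationary sets; for $x\in P_\kappa\lambda$, $\mathrm{NSS}_{\kappa_x,x}$ is the analogous ideal on $P_{\kappa_x}x$ (with $\kappa_x$ in place of $\kappa$, $x$ in place of $\lambda$). $C\subseteq P_\kappa\lambda$ is $1$-club iff $C\in\mathrm{NSS}^+_{\kappa,\lambda}$ and for every $x\in P_\kappa\lambda$ with $\kappa_x$ inaccessible and $C\cap P_{\kappa_x}x\in\mathrm{NSS}^+_{\kappa_x,x}$ we have $x\in C$. *)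

theory Defs
  imports Main "HOL-Library.Countable_Set"
begin

unbundle cardinal_syntax

(* Modelling conventions:
   kappa is represented by a set K with a cardinal (initial-ordinal) well-order r on it,
   so elements of K play the role of the ordinals < kappa; lambda >= kappa is represented
   by a set L with K \<subseteq> L. *)

definition Pk :: "'a set \<Rightarrow> 'a set \<Rightarrow> 'a set set" where
  "Pk K X = {x. x \<subseteq> X \<and> card_of (x) <o card_of (K)}"

text \<open>C_f relative to (K, X): kappa_x = |x \<inter> K|, and P_{kappa_x} x = Pk (x \<inter> K) x.\<close>
definition Cf :: "'a set \<Rightarrow> 'a set \<Rightarrow> ('a set \<Rightarrow> 'a set) \<Rightarrow> 'a set set" where
  "Cf K X f = {x \<in> Pk K X. x \<inter> K \<noteq> {} \<and> f ` Pk (x \<inter> K) x \<subseteq> Pk (x \<inter> K) x}"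

definition strongly_stationary :: "'a set \<Rightarrow> 'a set \<Rightarrow> 'a set set \<Rightarrow> bool" where
  "strongly_stationary K X S \<longleftrightarrow> S \<subseteq> Pk K X \<and>
     (\<forall>f. (\<forall>x\<in>Pk K X. f x \<in> Pk K X) \<longrightarrow> S \<inter> Cf K X f \<noteq> {})"

definition inaccessible :: "'b set \<Rightarrow> bool" where
  "inaccessible A \<longleftrightarrow> \<not> countable A \<and> regularCard (card_of A) \<and>
     (\<forall>B::'b set. card_of (B) <o card_of (A) \<longrightarrow> card_of (Pow B) <o card_of A)"

text \<open>The ordinal kappa_x (as a subset of K, i.e. the ordinals below |x \<inter> K|).\<close>
definition kappa_x :: "'a set \<Rightarrow> 'a rel \<Rightarrow> 'a set \<Rightarrow> 'a set" where
  "kappa_x K r x = {a \<in> K. card_of (underS r a) <o card_of (x \<inter> K)}"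

definition club :: "'a set \<Rightarrow> 'a rel \<Rightarrow> 'a set \<Rightarrow> bool" where
  "club K r C \<longleftrightarrow> C \<subseteq> K \<and> (\<forall>a\<in>K. \<exists>c\<in>C. (a, c) \<in> r) \<and>
     (\<forall>a\<in>K. underS r a \<noteq> {} \<and>
        (\<forall>b\<in>underS r a. \<exists>c\<in>C. b \<in> underS r c \<and> c \<in> underS r a) \<longrightarrow> a \<in> C)"

definition stationary :: "'a set \<Rightarrow> 'a rel \<Rightarrow> 'a set \<Rightarrow> bool" where
  "stationary K r S \<longleftrightarrow> S \<subseteq> K \<and> (\<forall>C. club K r C \<longrightarrow> S \<inter> C \<noteq> {})"

definition is_cardinal_pt :: "'a rel \<Rightarrow> 'a \<Rightarrow> bool" where
  "is_cardinal_pt r a \<longleftrightarrow> (\<forall>b\<in>underS r a. card_of (underS r b) <o card_of (underS r a))"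

definition mahlo :: "'a set \<Rightarrow> 'a rel \<Rightarrow> bool" where
  "mahlo K r \<longleftrightarrow> card_order_on K r \<and> inaccessible K \<and>
     stationary K r {a \<in> K. is_cardinal_pt r a \<and> inaccessible (underS r a)}"

definition one_club :: "'a set \<Rightarrow> 'a rel \<Rightarrow> 'a set \<Rightarrow> 'a set set \<Rightarrow> bool" where
  "one_club K r L C \<longleftrightarrow> C \<subseteq> Pk K L \<and> strongly_stationary K L C \<and>
     (\<forall>x\<in>Pk K L. inaccessible (x \<inter> K) \<and>
        strongly_stationary (kappa_x K r x) x (C \<inter> Pk (x \<inter> K) x) \<longrightarrow> x \<in> C)"

end

theory Submission imports Defs begin

lemma fin_less_inf: "finite A \<Longrightarrow> infinite C \<Longrightarrow> |A| <o |C|"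
  using finite_ordLess_infinite[OF card_of_Well_order card_of_Well_order] by (simp add: Field_card_of)

lemma ins_less: "infinite C \<Longrightarrow> |A| <o |C| \<Longrightarrow> |insert b A| <o |C|"
proof -
  assume a: "infinite C" "|A| <o |C|"
  have "|{b} \<union> A| <o |C|" by (rule card_of_Un_ordLess_infinite[OF a(1) fin_less_inf[OF _ a(1)] a(2)]) simp
  thus ?thesis by simp
qed

lemma empty_less: "A \<noteq> {} \<Longrightarrow> |{}| <o |A|"
  using card_of_ordLess2[of A "{}"] by auto

lemma inacc_stable: "inaccessible M \<Longrightarrow> stable |M|"
  unfolding inaccessible_def
  by (rule regularCard_stable[OF card_of_Card_order]) (auto simp: Field_card_of dest: countable_finite)

lemma inacc_inf: "inaccessible M \<Longrightarrow> infinite M"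
  unfolding inaccessible_def using countable_finite by blast

locale ctx =
  fixes K L :: "'a set" and r :: "'a rel" and h :: "'a set \<Rightarrow> 'a set"
  assumes co: "card_order_on K r" and inacc: "inaccessible K" and KL: "K \<subseteq> L"
    and hP: "\<And>y. y \<in> Pk K L \<Longrightarrow> h y \<in> Pk K L"
begin

lemma WO: "well_order_on K r" using co card_order_on_well_order_on by blast
lemma FK: "Field r = K" using WO well_order_on_Field by blast
lemma CO: "Card_order r" using co FK by simp
lemma wfr: "wf (r - Id)" using WO unfolding well_order_on_def by blast
lemma trr: "trans r" using WO unfolding well_order_on_def order_on_defs by blast
lemma antr: "antisym r" using WO unfolding well_order_on_def order_on_defs by blast
lemma tot: "x \<in> K \<Longrightarrow> y \<in> K \<Longrightarrow> x \<noteq> y \<Longrightarrow> (x, y) \<in> r \<or> (y, x) \<in> r"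
  using WO unfolding well_order_on_def order_on_defs total_on_def by blast
lemma refl: "x \<in> K \<Longrightarrow> (x, x) \<in> r"
  using WO unfolding well_order_on_def order_on_defs refl_on_def by blast
lemma inK: "(x, y) \<in> r \<Longrightarrow> x \<in> K \<and> y \<in> K"
  using FK by (auto intro: FieldI1 FieldI2)
lemma uS: "x \<in> underS r y \<longleftrightarrow> (x, y) \<in> r \<and> x \<noteq> y"
  unfolding underS_def by auto
lemma uS_incr: "(a, b) \<in> r \<Longrightarrow> underS r a \<subseteq> underS r b"
  using underS_incr[OF trr antr] .
lemma uS_trans: "x \<in> underS r y \<Longrightarrow> y \<in> underS r z \<Longrightarrow> x \<in> underS r z"
  using uS_incr uS by blast
lemma uSK: "underS r a \<subseteq> K" using Order_Relation.underS_Field[of r a] FK by simp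

lemma rK: "r =o |K|" using card_of_unique[OF co] .
lemma stK: "stable |K|" using inacc_stable[OF inacc] .
lemma infK: "infinite K" using inacc_inf[OF inacc] .
lemma uS_less: "a \<in> K \<Longrightarrow> |underS r a| <o |K|"
  using card_of_underS[OF CO, of a] FK rK ordLess_ordIso_trans by blast
lemma powK: "|B::'a set| <o |K| \<Longrightarrow> |Pow B| <o |K|"
  using inacc unfolding inaccessible_def by blast

lemma not_uS: "x \<in> K \<Longrightarrow> y \<in> K \<Longrightarrow> x \<notin> underS r y \<Longrightarrow> (y, x) \<in> r"
  using tot refl uS by blast


lemma gen_bound:
  assumes st: "stable |M|" and inf: "infinite M" and MK: "M \<subseteq> K"
    and sm: "\<And>b. b \<in> M \<Longrightarrow> |underS r b| <o |M|"
    and BM: "B \<subseteq> M" and Bs: "|B| <o |M|"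
  shows "\<exists>t\<in>M. B \<subseteq> underS r t"
proof (rule ccontr)
  assume nb: "\<not> ?thesis"
  have "M \<subseteq> (\<Union>b\<in>B. insert b (underS r b))"
  proof
    fix t assume t: "t \<in> M"
    then obtain b where b: "b \<in> B" "b \<notin> underS r t" using nb by blast
    have "b \<in> K" "t \<in> K" using b(1) t BM MK by auto
    hence "(t, b) \<in> r" using not_uS b(2) by blast
    thus "t \<in> (\<Union>b\<in>B. insert b (underS r b))" using b(1) uS by blast
  qed
  moreover have "|\<Union>b\<in>B. insert b (underS r b)| <o |M|"
    by (rule stable_UNION[OF st Bs]) (use ins_less[OF inf sm] BM in blast)
  ultimately have "|M| <o |M|" using card_of_mono1 ordLeq_ordLess_trans by blast
  thus False using ordLess_irreflexive by blast
qed

lemma SBK: "A \<subseteq> K \<Longrightarrow> |A| <o |K| \<Longrightarrow> \<exists>t\<in>K. A \<subseteq> underS r t"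
  by (rule gen_bound[OF stK infK order_refl uS_less])

lemma rep: assumes "|Z| <o |K|" shows "\<exists>b\<in>K. |Z| =o |underS r b|"
proof -
  have WOr: "Well_order r" using WO FK by simp
  have "|Z| <o r" using assms rK ordLess_ordIso_trans ordIso_symmetric by blast
  then obtain b where b: "b \<in> Field r" "|Z| =o Restr r (underS r b)"
    using ordLess_iff_ordIso_Restr[OF WOr card_of_Well_order] by blast
  have "Field (Restr r (underS r b)) = underS r b"
    using Field_Restr_ofilter[OF WOr] wo_rel.underS_ofilter[of r b] WOr unfolding wo_rel_def by blast
  hence "|Z| =o |underS r b|" using card_of_cong[OF b(2)] by (simp add: Field_card_of)
  thus ?thesis using b FK by blast
qed

definition H where "H x = x \<union> (\<Union>y\<in>Pow x. h y)"
definition X where "X = wfrec (r - Id) (\<lambda>F a. \<Union>b\<in>underS r a. H (F b \<union> {b}))"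

lemma H_ext: "x \<subseteq> H x" unfolding H_def by blast

lemma X_eq: "X a = (\<Union>b\<in>underS r a. H (X b \<union> {b}))"
proof -
  have "X a = (\<Union>b\<in>underS r a. H (cut X (r - Id) a b \<union> {b}))"
    unfolding X_def by (subst wfrec[OF wfr]) simp
  also have "\<dots> = (\<Union>b\<in>underS r a. H (X b \<union> {b}))"
    by (rule SUP_cong) (auto simp: cut_def uS)
  finally show ?thesis .
qed

lemma X_sub: "b \<in> underS r a \<Longrightarrow> H (X b \<union> {b}) \<subseteq> X a"
  by (subst X_eq[of a]) blast

lemma X_sub2: "b \<in> underS r a \<Longrightarrow> X b \<union> {b} \<subseteq> X a"
  using X_sub H_ext by blast

lemma X_mono: "(d, e) \<in> r \<Longrightarrow> X d \<subseteq> X e"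
  using X_sub2 uS by (cases "d = e") auto

lemma H_Pk: assumes "x \<in> Pk K L" shows "H x \<in> Pk K L"
proof -
  have x: "x \<subseteq> L" "|x| <o |K|" using assms unfolding Pk_def by auto
  have yP: "y \<in> Pk K L" if "y \<in> Pow x" for y
    using that x card_of_mono1[of y x] ordLeq_ordLess_trans unfolding Pk_def by blast
  have hy: "|h y| <o |K|" "h y \<subseteq> L" if "y \<in> Pow x" for y
    using hP[OF yP[OF that]] unfolding Pk_def by auto
  have "|\<Union>y\<in>Pow x. h y| <o |K|"
    by (rule stable_UNION[OF stK powK[OF x(2)]]) (erule hy(1))
  hence "|H x| <o |K|" unfolding H_def using card_of_Un_ordLess_infinite[OF infK x(2)] by blast
  moreover have "H x \<subseteq> L" unfolding H_def using x hy(2) by blast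
  ultimately show ?thesis unfolding Pk_def by blast
qed

lemma X_Pk: "a \<in> K \<Longrightarrow> X a \<in> Pk K L"
proof (induction a rule: wf_induct[OF wfr])
  case (1 a)
  have IH: "X b \<in> Pk K L" if "b \<in> underS r a" for b
  proof -
    have "(b, a) \<in> r - Id" using that unfolding uS by auto
    moreover have "b \<in> K" using that uSK by blast
    ultimately show ?thesis using 1(1) by simp
  qed
  have P: "H (X b \<union> {b}) \<in> Pk K L" if b: "b \<in> underS r a" for b
  proof (rule H_Pk)
    have i: "X b \<subseteq> L" "|X b| <o |K|" using IH[OF b] unfolding Pk_def by auto
    have "b \<in> L" using b uSK KL by blast
    hence "X b \<union> {b} \<subseteq> L" using i(1) by blast
    moreover have "|insert b (X b)| <o |K|" using ins_less[OF infK i(2)] .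
    ultimately show "X b \<union> {b} \<in> Pk K L" unfolding Pk_def by simp
  qed
  have P1: "|H (X b \<union> {b})| <o |K|" "H (X b \<union> {b}) \<subseteq> L" if "b \<in> underS r a" for b
    using P[OF that] unfolding Pk_def by auto
  have "|X a| <o |K|"
    unfolding X_eq[of a] by (rule stable_UNION[OF stK uS_less[OF 1(2)]]) (erule P1(1))
  moreover have "X a \<subseteq> L" unfolding X_eq[of a] using P1(2) by blast
  ultimately show ?case unfolding Pk_def by blast
qed

definition D where "D = {a\<in>K. X a \<inter> K \<subseteq> underS r a \<and> (\<forall>d\<in>underS r a. |X d| <o |underS r a| )}"

lemma D_closed:
  assumes a: "a \<in> K" and lim: "\<forall>b\<in>underS r a. \<exists>c\<in>D. b \<in> underS r c \<and> c \<in> underS r a"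
  shows "a \<in> D"
proof -
  have 1: "X a \<inter> K \<subseteq> underS r a"
  proof
    fix e assume e: "e \<in> X a \<inter> K"
    hence "e \<in> (\<Union>b\<in>underS r a. H (X b \<union> {b}))" by (simp only: X_eq[of a]) blast
    then obtain b where b: "b \<in> underS r a" "e \<in> H (X b \<union> {b})" by blast
    then obtain c where c: "c \<in> D" "b \<in> underS r c" "c \<in> underS r a" using lim by blast
    have "e \<in> X c" using X_sub[OF c(2)] b(2) by blast
    hence "e \<in> underS r c" using c(1) e unfolding D_def by blast
    thus "e \<in> underS r a" using uS_trans c(3) by blast
  qed
  have 2: "\<forall>d\<in>underS r a. |X d| <o |underS r a|"
  proof
    fix d assume d: "d \<in> underS r a"
    then obtain c where c: "c\<in>D" "d \<in> underS r c" "c \<in> underS r a" using lim by blast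
    have "|X d| <o |underS r c|" using c(1,2) unfolding D_def by blast
    moreover have "underS r c \<subseteq> underS r a" using uS_incr c(3) uS by blast
    ultimately show "|X d| <o |underS r a|" using card_of_mono1 ordLess_ordLeq_trans by blast
  qed
  show ?thesis using a 1 2 unfolding D_def by blast
qed

lemma nxt_ex: assumes a: "a \<in> K"
  shows "\<exists>t. t \<in> K \<and> insert a (X a \<inter> K) \<subseteq> underS r t \<and> |X a| <o |underS r t|"
proof -
  have xs: "|X a| <o |K|" using X_Pk[OF a] unfolding Pk_def by blast
  obtain b where b: "b\<in>K" "|Pow (X a)| =o |underS r b|" using rep[OF powK[OF xs]] by blast
  have A: "insert b (insert a (X a \<inter> K)) \<subseteq> K" using a b(1) by blast
  have "|X a \<inter> K| <o |K|" by (rule ordLeq_ordLess_trans[OF card_of_mono1 xs]) blast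
  hence "|insert b (insert a (X a \<inter> K))| <o |K|" by (intro ins_less[OF infK])
  then obtain t where t: "t\<in>K" "insert b (insert a (X a \<inter> K)) \<subseteq> underS r t" using SBK[OF A] by blast
  have "(b, t) \<in> r" using t(2) unfolding underS_def by blast
  hence "underS r b \<subseteq> underS r t" by (rule uS_incr)
  hence "|underS r b| \<le>o |underS r t|" by (rule card_of_mono1)
  hence "|X a| <o |underS r t|"
    by (rule ordLess_ordLeq_trans[OF ordLess_ordIso_trans[OF card_of_Pow b(2)]])
  thus ?thesis using t(1) t(2) by blast
qed

definition nxt where "nxt a = (SOME t. t \<in> K \<and> insert a (X a \<inter> K) \<subseteq> underS r t \<and> |X a| <o |underS r t| )"

lemma nxt: "a \<in> K \<Longrightarrow> nxt a \<in> K \<and> insert a (X a \<inter> K) \<subseteq> underS r (nxt a) \<and> |X a| <o |underS r (nxt a)|"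
  unfolding nxt_def by (rule someI_ex[OF nxt_ex])

lemma D_unb: assumes a0: "a0 \<in> K" shows "\<exists>c\<in>D. (a0, c) \<in> r"
proof -
  define s where "s n = (nxt ^^ n) a0" for n
  have s0: "s 0 = a0" unfolding s_def by simp
  have sS: "s (Suc n) = nxt (s n)" for n unfolding s_def by simp
  have sK: "s n \<in> K" for n
  proof (induction n)
    case 0 show ?case using s0 a0 by simp
  next
    case (Suc n) show ?case using sS[of n] nxt[OF Suc] by simp
  qed
  have sn1: "insert (s n) (X (s n) \<inter> K) \<subseteq> underS r (s (Suc n))" for n using nxt[OF sK[of n]] sS[of n] by simp
  have sn2: "|X (s n)| <o |underS r (s (Suc n))|" for n using nxt[OF sK[of n]] sS[of n] by simp
  have rng: "|range s| <o |K|"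
  proof (rule ccontr)
    assume "\<not> |range s| <o |K|"
    hence "|K| \<le>o |range s|" by (simp add: not_ordLess_iff_ordLeq[OF card_of_Well_order card_of_Well_order])
    then obtain g where g: "inj_on g K" "g ` K \<subseteq> range s" using card_of_ordLeq[of K "range s"] by blast
    have "countable (g ` K)" using countable_subset[OF g(2)] by simp
    hence "countable K" using countable_image_inj_on g(1) by blast
    thus False using inacc unfolding inaccessible_def by blast
  qed
  obtain u where u: "u \<in> K" "range s \<subseteq> underS r u" using SBK[OF _ rng] sK by blast
  define U where "U = {u\<in>K. \<forall>n. (s n, u) \<in> r}"
  have "u \<in> U" using u sK unfolding U_def underS_def by blast
  then obtain c where c: "c \<in> U" "\<And>y. (y, c) \<in> r - Id \<Longrightarrow> y \<notin> U" using wfE_min[OF wfr] by blast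
  have cK: "c \<in> K" and cs: "\<And>n. (s n, c) \<in> r" using c(1) unfolding U_def by auto
  have below: "\<exists>n. b \<in> underS r (s n)" if b: "b \<in> underS r c" for b
  proof -
    have bK: "b \<in> K" using b uSK by blast
    have "b \<notin> U" using c(2) b unfolding uS by blast
    then obtain n where "(s n, b) \<notin> r" using bK unfolding U_def by blast
    hence "b \<in> underS r (s n)" using not_uS[OF bK sK[of n]] by blast
    thus ?thesis by blast
  qed
  have incc: "underS r (s n) \<subseteq> underS r c" for n using uS_incr[OF cs] .
  have 1: "X c \<inter> K \<subseteq> underS r c"
  proof
    fix e assume e: "e \<in> X c \<inter> K"
    hence "e \<in> (\<Union>b\<in>underS r c. H (X b \<union> {b}))" by (simp only: X_eq[of c]) blast
    then obtain b where b: "b \<in> underS r c" "e \<in> H (X b \<union> {b})" by blast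
    obtain n where n: "b \<in> underS r (s n)" using below[OF b(1)] by blast
    have "e \<in> X (s n) \<inter> K" using X_sub[OF n] b(2) e by blast
    hence "e \<in> underS r (s (Suc n))" using sn1[of n] by blast
    thus "e \<in> underS r c" using incc by blast
  qed
  have 2: "\<forall>d\<in>underS r c. |X d| <o |underS r c|"
  proof
    fix d assume d: "d \<in> underS r c"
    obtain n where n: "d \<in> underS r (s n)" using below[OF d] by blast
    have "X d \<subseteq> X (s n)" using n unfolding uS by (intro X_mono) blast
    hence "|X d| \<le>o |X (s n)|" by (rule card_of_mono1)
    moreover have "|underS r (s (Suc n))| \<le>o |underS r c|" using card_of_mono1 incc by blast
    ultimately show "|X d| <o |underS r c|" using ordLeq_ordLess_trans[OF _ ordLess_ordLeq_trans[OF sn2[of n]]] by blast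
  qed
  have "c \<in> D" using cK 1 2 unfolding D_def by blast
  moreover have "(a0, c) \<in> r" using cs[of 0] s0 by simp
  ultimately show ?thesis by blast
qed

lemma D_club: "club K r D"
  unfolding club_def
proof (intro conjI)
  show "D \<subseteq> K" unfolding D_def by blast
  show "\<forall>a\<in>K. \<exists>c\<in>D. (a, c) \<in> r" using D_unb by blast
  show "\<forall>a\<in>K. underS r a \<noteq> {} \<and> (\<forall>b\<in>underS r a. \<exists>c\<in>D. b \<in> underS r c \<and> c \<in> underS r a) \<longrightarrow> a \<in> D"
    using D_closed by blast
qed

lemma good:
  assumes aD: "a \<in> D" and inc: "inaccessible (underS r a)" and cp: "is_cardinal_pt r a"
  shows "X a \<in> Pk K L \<and> X a \<inter> K = underS r a \<and> underS r a \<noteq> {} \<and>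
    (\<forall>y\<in>Pk (X a \<inter> K) (X a). h y \<subseteq> X a \<and> |h y| <o |underS r a| )"
proof -
  let ?M = "underS r a"
  have aK: "a \<in> K" and aD1: "X a \<inter> K \<subseteq> ?M" and aD2: "\<And>d. d \<in> ?M \<Longrightarrow> |X d| <o |?M|"
    using aD unfolding D_def by auto
  have stM: "stable |?M|" using inacc_stable[OF inc] .
  have infM: "infinite ?M" using inacc_inf[OF inc] .
  have MK: "?M \<subseteq> K" by (rule uSK)
  have sm: "\<And>b. b \<in> ?M \<Longrightarrow> |underS r b| <o |?M|" using cp unfolding is_cardinal_pt_def by blast
  have eq: "X a \<inter> K = ?M"
  proof
    show "?M \<subseteq> X a \<inter> K" using X_sub2 MK by blast
  qed (rule aD1)
  have ne: "?M \<noteq> {}" using infM by auto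
  have nomax: "\<exists>c\<in>?M. t \<in> underS r c" if t: "t \<in> ?M" for t
  proof -
    have "|{t}| <o |?M|" by (rule fin_less_inf[OF _ infM]) simp
    then obtain c where "c \<in> ?M" "{t} \<subseteq> underS r c" using gen_bound[OF stM infM MK sm] t by blast
    thus ?thesis by blast
  qed
  have cl: "h y \<subseteq> X a \<and> |h y| <o |?M|" if y: "y \<in> Pk (X a \<inter> K) (X a)" for y
  proof -
    have y1: "y \<subseteq> X a" and y2: "|y| <o |?M|" using y eq unfolding Pk_def by auto
    have "\<forall>e\<in>y. \<exists>b. b \<in> ?M \<and> e \<in> H (X b \<union> {b})"
    proof
      fix e assume "e \<in> y"
      hence "e \<in> (\<Union>b\<in>?M. H (X b \<union> {b}))" using y1 by (simp only: X_eq[of a]) blast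
      thus "\<exists>b. b \<in> ?M \<and> e \<in> H (X b \<union> {b})" by blast
    qed
    then obtain \<beta> where be: "\<And>e. e \<in> y \<Longrightarrow> \<beta> e \<in> ?M \<and> e \<in> H (X (\<beta> e) \<union> {\<beta> e})"
      by metis
    have "|\<beta> ` y| <o |?M|" by (rule ordLeq_ordLess_trans[OF card_of_image y2])
    moreover have "\<beta> ` y \<subseteq> ?M" using be by blast
    ultimately obtain t where t: "t \<in> ?M" "\<beta> ` y \<subseteq> underS r t"
      using gen_bound[OF stM infM MK sm] by blast
    have "y \<subseteq> X t"
    proof
      fix e assume e: "e \<in> y"
      hence "\<beta> e \<in> underS r t" using t(2) by blast
      thus "e \<in> X t" using X_sub be[OF e] by blast
    qed
    hence hy: "h y \<subseteq> H (X t \<union> {t})" unfolding H_def by blast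
    obtain c where c: "c \<in> ?M" "t \<in> underS r c" using nomax[OF t(1)] by blast
    have "h y \<subseteq> X c" using hy X_sub[OF c(2)] by blast
    hence "|h y| \<le>o |X c|" by (rule card_of_mono1)
    hence "|h y| <o |?M|" using ordLeq_ordLess_trans aD2[OF c(1)] by blast
    moreover have "h y \<subseteq> X a" using hy X_sub[OF t(1)] by blast
    ultimately show ?thesis by blast
  qed
  show ?thesis using X_Pk[OF aK] eq ne cl by blast
qed

lemma kappa_ge: assumes x: "x \<in> Pk K L" shows "|x \<inter> K| \<le>o |kappa_x K r x|"
proof -
  have xs: "|x \<inter> K| <o |K|" using x unfolding Pk_def
    using ordLeq_ordLess_trans[OF card_of_mono1[of "x \<inter> K" x]] by blast
  define Q where "Q = {b\<in>K. |x \<inter> K| \<le>o |underS r b|}"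
  obtain b0 where "b0 \<in> K" "|x \<inter> K| =o |underS r b0|" using rep[OF xs] by blast
  hence "b0 \<in> Q" unfolding Q_def using ordIso_iff_ordLeq by blast
  then obtain b where b: "b \<in> Q" "\<And>y. (y, b) \<in> r - Id \<Longrightarrow> y \<notin> Q" using wfE_min[OF wfr] by blast
  have "underS r b \<subseteq> kappa_x K r x"
  proof
    fix c assume c: "c \<in> underS r b"
    have cK: "c \<in> K" using c uSK by blast
    have "c \<notin> Q" using b(2) c unfolding underS_def by blast
    hence "\<not> |x \<inter> K| \<le>o |underS r c|" using cK unfolding Q_def by blast
    hence "|underS r c| <o |x \<inter> K|"
      using not_ordLeq_iff_ordLess[OF card_of_Well_order card_of_Well_order] by blast
    thus "c \<in> kappa_x K r x" using cK unfolding kappa_x_def by blast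
  qed
  hence "|underS r b| \<le>o |kappa_x K r x|" by (rule card_of_mono1)
  moreover have "|x \<inter> K| \<le>o |underS r b|" using b(1) unfolding Q_def by blast
  ultimately show ?thesis using ordLeq_transitive by blast
qed

end

theorem lemma5p1:
  fixes K L :: "'a set" and r :: "'a rel" and f :: "'a set \<Rightarrow> 'a set"
  assumes "card_order_on K r"
    and "mahlo K r"
    and "K \<subseteq> L"
    and "\<forall>x\<in>Pk K L. f x \<in> Pk K L"
  shows "one_club K r L (Cf K L f)"
proof -
  have inK: "inaccessible K" using assms(2) unfolding mahlo_def by blast
  have stat: "stationary K r {a \<in> K. is_cardinal_pt r a \<and> inaccessible (underS r a)}"
    using assms(2) unfolding mahlo_def by blast
  have sub: "Cf K L f \<subseteq> Pk K L" unfolding Cf_def by blast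
  have ss: "strongly_stationary K L (Cf K L f)"
    unfolding strongly_stationary_def
  proof (intro conjI allI impI sub)
    fix g assume g: "\<forall>x\<in>Pk K L. g x \<in> Pk K L"
    have hP: "(\<lambda>y. f y \<union> g y) y \<in> Pk K L" if "y \<in> Pk K L" for y
    proof -
      have "f y \<in> Pk K L" "g y \<in> Pk K L" using assms(4) g that by auto
      thus ?thesis unfolding Pk_def
        using card_of_Un_ordLess_infinite[OF inacc_inf[OF inK]] by auto
    qed
    interpret c: ctx K L r "\<lambda>y. f y \<union> g y"
      by unfold_locales (use assms(1,3) inK hP in auto)
    obtain a where a: "a \<in> c.D" "is_cardinal_pt r a" "inaccessible (underS r a)"
      using stat c.D_club unfolding stationary_def by blast
    note G = c.good[OF a(1) a(3) a(2)]
    let ?x = "c.X a"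
    have "?x \<in> Cf K L f \<inter> Cf K L g"
    proof -
      have x1: "?x \<in> Pk K L" and x2: "?x \<inter> K \<noteq> {}" using G by auto
      have cl: "\<And>y. y \<in> Pk (?x \<inter> K) ?x \<Longrightarrow> f y \<union> g y \<subseteq> ?x \<and> |f y \<union> g y| <o |?x \<inter> K|"
        using G by auto
      have "f ` Pk (?x \<inter> K) ?x \<subseteq> Pk (?x \<inter> K) ?x"
      proof
        fix z assume "z \<in> f ` Pk (?x \<inter> K) ?x"
        then obtain y where y: "y \<in> Pk (?x \<inter> K) ?x" "z = f y" by blast
        have "z \<subseteq> ?x" "|z| <o |?x \<inter> K|" using cl[OF y(1)] y(2)
          ordLeq_ordLess_trans[OF card_of_mono1[of "f y" "f y \<union> g y"]] by auto
        thus "z \<in> Pk (?x \<inter> K) ?x" unfolding Pk_def by blast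
      qed
      moreover have "g ` Pk (?x \<inter> K) ?x \<subseteq> Pk (?x \<inter> K) ?x"
      proof
        fix z assume "z \<in> g ` Pk (?x \<inter> K) ?x"
        then obtain y where y: "y \<in> Pk (?x \<inter> K) ?x" "z = g y" by blast
        have "z \<subseteq> ?x" "|z| <o |?x \<inter> K|" using cl[OF y(1)] y(2)
          ordLeq_ordLess_trans[OF card_of_mono1[of "g y" "f y \<union> g y"]] by auto
        thus "z \<in> Pk (?x \<inter> K) ?x" unfolding Pk_def by blast
      qed
      ultimately show ?thesis using x1 x2 unfolding Cf_def by blast
    qed
    thus "Cf K L f \<inter> Cf K L g \<noteq> {}" by blast
  qed
  have cl1: "x \<in> Cf K L f"
    if x: "x \<in> Pk K L" and ix: "inaccessible (x \<inter> K)"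
      and sx: "strongly_stationary (kappa_x K r x) x (Cf K L f \<inter> Pk (x \<inter> K) x)" for x
  proof (rule ccontr)
    assume nx: "x \<notin> Cf K L f"
    interpret c: ctx K L r f
      by unfold_locales (use assms(1,3,4) inK in auto)
    have xne: "x \<inter> K \<noteq> {}" using inacc_inf[OF ix] by auto
    then obtain y where y: "y \<in> Pk (x \<inter> K) x" "f y \<notin> Pk (x \<inter> K) x"
      using nx x unfolding Cf_def by blast
    let ?k = "kappa_x K r x"
    have yk: "y \<in> Pk ?k x" using y(1) ordLess_ordLeq_trans[OF _ c.kappa_ge[OF x]]
      unfolding Pk_def by blast
    have all: "\<forall>fa. (\<forall>xa\<in>Pk ?k x. fa xa \<in> Pk ?k x) \<longrightarrow> Cf K L f \<inter> Pk (x \<inter> K) x \<inter> Cf ?k x fa \<noteq> {}"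
      using sx unfolding strongly_stationary_def by blast
    have "Cf K L f \<inter> Pk (x \<inter> K) x \<inter> Cf ?k x (\<lambda>_. y) \<noteq> {}"
      using all[rule_format, of "\<lambda>_. y"] yk by blast
    then obtain z where z: "z \<in> Cf K L f" "z \<in> Pk (x \<inter> K) x" "z \<in> Cf ?k x (\<lambda>_. y)"
      by blast
    have z1: "z \<inter> ?k \<noteq> {}" and z2: "(\<lambda>_. y) ` Pk (z \<inter> ?k) z \<subseteq> Pk (z \<inter> ?k) z"
      using z(3) unfolding Cf_def by auto
    have "{} \<in> Pk (z \<inter> ?k) z" using empty_less[OF z1] unfolding Pk_def by blast
    hence "y \<in> Pk (z \<inter> ?k) z" using z2 by blast
    hence ya: "y \<subseteq> z" "|y| <o |z \<inter> ?k|" unfolding Pk_def by auto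
    have "?k \<subseteq> K" unfolding kappa_x_def by blast
    hence "|z \<inter> ?k| \<le>o |z \<inter> K|" by (intro card_of_mono1) blast
    hence "|y| <o |z \<inter> K|" using ya(2) ordLess_ordLeq_trans by blast
    hence "y \<in> Pk (z \<inter> K) z" using ya(1) unfolding Pk_def by blast
    hence "f y \<in> Pk (z \<inter> K) z" using z(1) unfolding Cf_def by blast
    hence fy: "f y \<subseteq> z" "|f y| <o |z \<inter> K|" unfolding Pk_def by auto
    have zx: "z \<subseteq> x" using z(2) unfolding Pk_def by blast
    hence "|z \<inter> K| \<le>o |x \<inter> K|" by (intro card_of_mono1) blast
    hence "|f y| <o |x \<inter> K|" using fy(2) ordLess_ordLeq_trans by blast
    hence "f y \<in> Pk (x \<inter> K) x" using fy(1) zx unfolding Pk_def by blast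
    thus False using y(2) by blast
  qed
  show ?thesis unfolding one_club_def using sub ss cl1 by blast
qed
end
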